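(* Let $G$ be a group and $N$ a normal subgroup of $G$. If $S=\bigoplus_{g\in G}S_g$ is symmetrically $G$-graded, then the induced $G/N$-grading $\{S_C\}_{C\in G/N}$ is symmetric, i.e. $S_CS_{C^{-1}}S_C=S_C$ for all $C\in G/N$.
   Context: Rings are associative, not necessarily unital; $AB$ denotes finite sums of products. A $G$-grading: $S=\bigoplus_gS_g$, $S_gS_h\subseteq S_{gh}$; it is symmetric if $S_gS_{g^{-1}}S_g=S_g$ for all $g\in G$. The induced $G/N$-grading is $S_C=\bigoplus_{g\in C}S_g$ for $C\in G/N$. *)

theory Defs
  imports "HOL-Algebra.Coset"
begin

text \<open>Rings are modelled as the whole of a type of class ring
(associative, not necessarily unital).\<close>

definition setprod_ring :: "'a::ring set \<Rightarrow> 'a set \<Rightarrow> 'a set" where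
  "setprod_ring A B = {sum_list (map (\<lambda>(a, b). a * b) ps) | ps. set ps \<subseteq> A \<times> B}"

definition add_subgroup :: "'a::ring set \<Rightarrow> bool" where
  "add_subgroup A \<longleftrightarrow> 0 \<in> A \<and> (\<forall>x\<in>A. \<forall>y\<in>A. x + y \<in> A) \<and> (\<forall>x\<in>A. - x \<in> A)"

definition group_graded :: "('g, 'm) monoid_scheme \<Rightarrow> ('g \<Rightarrow> 'a::ring set) \<Rightarrow> bool" where
  "group_graded G S \<longleftrightarrow>
     (\<forall>g\<in>carrier G. add_subgroup (S g)) \<and>
     (\<forall>g\<in>carrier G. \<forall>h\<in>carrier G. setprod_ring (S g) (S h) \<subseteq> S (g \<otimes>\<^bsub>G\<^esub> h)) \<and>
     (\<forall>x::'a. \<exists>!c. (\<forall>g. g \<notin> carrier G \<longrightarrow> c g = 0) \<and> finite {g. c g \<noteq> 0} \<and>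
         (\<forall>g\<in>carrier G. c g \<in> S g) \<and> x = (\<Sum>g\<in>{g. c g \<noteq> 0}. c g))"

definition symmetric_graded :: "('g, 'm) monoid_scheme \<Rightarrow> ('g \<Rightarrow> 'a::ring set) \<Rightarrow> bool" where
  "symmetric_graded G S \<longleftrightarrow> group_graded G S \<and>
     (\<forall>g\<in>carrier G. setprod_ring (setprod_ring (S g) (S (inv\<^bsub>G\<^esub> g))) (S g) = S g)"

definition induced_comp :: "('g \<Rightarrow> 'a::ring set) \<Rightarrow> 'g set \<Rightarrow> 'a set" where
  "induced_comp S C = {\<Sum>g\<in>F. c g | F c. finite F \<and> F \<subseteq> C \<and> (\<forall>g\<in>F. c g \<in> S g)}"

end

theory Submission
  imports Defs
begin

lemma sp_mono: "A \<subseteq> A' \<Longrightarrow> B \<subseteq> B' \<Longrightarrow> setprod_ring A B \<subseteq> setprod_ring A' B'"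
  unfolding setprod_ring_def by blast

lemma sp_zero: "0 \<in> setprod_ring A B"
  unfolding setprod_ring_def by (rule CollectI, rule exI[of _ "[]"]) simp

lemma sp_add: "x \<in> setprod_ring A B \<Longrightarrow> y \<in> setprod_ring A B \<Longrightarrow> x + y \<in> setprod_ring A B"
  unfolding setprod_ring_def
  apply clarify
  subgoal for ps qs by (intro exI[of _ "ps @ qs"]) auto
  done

lemma sp_sum: "finite F \<Longrightarrow> (\<forall>g\<in>F. f g \<in> setprod_ring A B) \<Longrightarrow> sum f F \<in> setprod_ring A B"
  by (induction F rule: finite_induct) (auto intro: sp_zero sp_add)

lemma sp_single: "a \<in> A \<Longrightarrow> b \<in> B \<Longrightarrow> a * b \<in> setprod_ring A B"
  unfolding setprod_ring_def by (rule CollectI, rule exI[of _ "[(a,b)]"]) auto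

lemma sp_sub:
  assumes "0 \<in> T" "\<And>x y. x \<in> T \<Longrightarrow> y \<in> T \<Longrightarrow> x + y \<in> T"
    "\<And>a b. a \<in> A \<Longrightarrow> b \<in> B \<Longrightarrow> a * b \<in> T"
  shows "setprod_ring A B \<subseteq> T"
proof
  fix x assume "x \<in> setprod_ring A B"
  then obtain ps where x: "x = sum_list (map (\<lambda>(a, b). a * b) ps)" "set ps \<subseteq> A \<times> B"
    unfolding setprod_ring_def by blast
  have "set ps \<subseteq> A \<times> B \<Longrightarrow> sum_list (map (\<lambda>(a, b). a * b) ps) \<in> T"
    by (induction ps) (auto intro: assms)
  thus "x \<in> T" using x by simp
qed

lemma ic_zero: "0 \<in> induced_comp S Z"
  unfolding induced_comp_def by (rule CollectI, rule exI[of _ "{}"]) auto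

lemma ic_single: "g \<in> Z \<Longrightarrow> x \<in> S g \<Longrightarrow> x \<in> induced_comp S Z"
  unfolding induced_comp_def
  by (rule CollectI, rule exI[of _ "{g}"], rule exI[of _ "\<lambda>_. x"]) auto

lemma ic_add:
  assumes sub: "\<And>g. g \<in> Z \<Longrightarrow> add_subgroup (S g)"
    and x: "x \<in> induced_comp S Z" and y: "y \<in> induced_comp S Z"
  shows "x + y \<in> induced_comp S Z"
proof -
  obtain F c where F: "finite F" "F \<subseteq> Z" "\<forall>g\<in>F. c g \<in> S g" "x = (\<Sum>g\<in>F. c g)"
    using x unfolding induced_comp_def by blast
  obtain H d where H: "finite H" "H \<subseteq> Z" "\<forall>g\<in>H. d g \<in> S g" "y = (\<Sum>g\<in>H. d g)"
    using y unfolding induced_comp_def by blast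
  define e where "e g = (if g \<in> F then c g else 0) + (if g \<in> H then d g else 0)" for g
  have "x = (\<Sum>g\<in>F \<union> H. if g \<in> F then c g else 0)"
    using F H by (simp add: sum.If_cases Int_absorb1)
  moreover have "y = (\<Sum>g\<in>F \<union> H. if g \<in> H then d g else 0)"
    using F H by (simp add: sum.If_cases Int_absorb1 Int_commute)
  ultimately have "x + y = (\<Sum>g\<in>F \<union> H. e g)"
    unfolding e_def by (simp add: sum.distrib)
  moreover have "\<forall>g\<in>F \<union> H. e g \<in> S g"
  proof
    fix g assume g: "g \<in> F \<union> H"
    then have a: "add_subgroup (S g)" using F H sub by blast
    then show "e g \<in> S g" unfolding e_def using F H a
      unfolding add_subgroup_def by auto
  qed
  ultimately show ?thesis unfolding induced_comp_def using F H by blast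
qed

lemma ic_sum:
  assumes sub: "\<And>g. g \<in> Z \<Longrightarrow> add_subgroup (S g)"
  shows "finite F \<Longrightarrow> (\<forall>i\<in>F. f i \<in> induced_comp S Z) \<Longrightarrow> sum f F \<in> induced_comp S Z"
  by (induction F rule: finite_induct) (auto intro: ic_zero ic_add sub)

lemma ic_mult:
  assumes gr: "group_graded G S"
    and XG: "X \<subseteq> carrier G" and YG: "Y \<subseteq> carrier G" and ZG: "Z \<subseteq> carrier G"
    and XYZ: "\<And>g h. g \<in> X \<Longrightarrow> h \<in> Y \<Longrightarrow> g \<otimes>\<^bsub>G\<^esub> h \<in> Z"
    and x: "x \<in> induced_comp S X" and y: "y \<in> induced_comp S Y"
  shows "x * y \<in> induced_comp S Z"
proof -
  have sub: "\<And>g. g \<in> Z \<Longrightarrow> add_subgroup (S g)" using gr ZG unfolding group_graded_def by blast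
  obtain F c where F: "finite F" "F \<subseteq> X" "\<forall>g\<in>F. c g \<in> S g" "x = (\<Sum>g\<in>F. c g)"
    using x unfolding induced_comp_def by blast
  obtain H d where H: "finite H" "H \<subseteq> Y" "\<forall>g\<in>H. d g \<in> S g" "y = (\<Sum>g\<in>H. d g)"
    using y unfolding induced_comp_def by blast
  have "x * y = (\<Sum>g\<in>F. \<Sum>h\<in>H. c g * d h)"
    using F H by (simp add: sum_distrib_left sum_distrib_right sum.swap[of _ H])
  also have "\<dots> \<in> induced_comp S Z"
  proof (rule ic_sum[OF sub])
    show "finite F" by (rule F(1))
    show "\<forall>g\<in>F. (\<Sum>h\<in>H. c g * d h) \<in> induced_comp S Z"
    proof
    fix g assume g: "g \<in> F"
    show "(\<Sum>h\<in>H. c g * d h) \<in> induced_comp S Z"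
    proof (rule ic_sum[OF sub])
      show "finite H" by (rule H(1))
      show "\<forall>h\<in>H. c g * d h \<in> induced_comp S Z"
      proof
      fix h assume h: "h \<in> H"
      have gc: "g \<in> carrier G" "h \<in> carrier G" using g h F H XG YG by auto
      have "c g * d h \<in> setprod_ring (S g) (S h)"
        using g h F H by (intro sp_single) auto
      also have "\<dots> \<subseteq> S (g \<otimes>\<^bsub>G\<^esub> h)" using gr gc unfolding group_graded_def by blast
      finally show "c g * d h \<in> induced_comp S Z"
        by (rule ic_single[rotated]) (use g h F(2) H(2) in \<open>intro XYZ, auto\<close>)
    qed
    qed
  qed
  qed
  finally show ?thesis .
qed

theorem proposition5p5:
  fixes G :: "('g, 'm) monoid_scheme" and N :: "'g set" and S :: "'g \<Rightarrow> 'a::ring set"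
  assumes "group G" and "N \<lhd> G" and "symmetric_graded G S"
  shows "\<forall>C\<in>carrier (G Mod N).
           setprod_ring (setprod_ring (induced_comp S C) (induced_comp S (inv\<^bsub>G Mod N\<^esub> C)))
             (induced_comp S C) = induced_comp S C"
proof
  fix C assume C: "C \<in> carrier (G Mod N)"
  interpret normal N G by fact
  have gr: "group_graded G S" and sym: "\<forall>g\<in>carrier G. setprod_ring (setprod_ring (S g) (S (inv\<^bsub>G\<^esub> g))) (S g) = S g"
    using assms(3) unfolding symmetric_graded_def by auto
  have inv: "inv\<^bsub>G Mod N\<^esub> C = set_inv\<^bsub>G\<^esub> C" using inv_FactGroup C by simp
  obtain a where a: "a \<in> carrier G" "C = N #>\<^bsub>G\<^esub> a"
    using C unfolding carrier_FactGroup by auto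
  have NG: "N \<subseteq> carrier G" by (rule subset)
  have CG: "C \<subseteq> carrier G" using a NG unfolding r_coset_def by auto
  have CiG: "set_inv\<^bsub>G\<^esub> C \<subseteq> carrier G" using CG unfolding SET_INV_def by auto
  have subC: "\<And>g. g \<in> C \<Longrightarrow> add_subgroup (S g)" using gr CG unfolding group_graded_def by blast
  let ?SC = "induced_comp S C" and ?SCi = "induced_comp S (set_inv\<^bsub>G\<^esub> C)"
  let ?P = "setprod_ring (setprod_ring ?SC ?SCi) ?SC"
  have "?P \<subseteq> ?SC"
  proof (rule sp_sub)
    show "0 \<in> ?SC" by (rule ic_zero)
    show "\<And>x y. x \<in> ?SC \<Longrightarrow> y \<in> ?SC \<Longrightarrow> x + y \<in> ?SC" by (rule ic_add[OF subC])
    have subN: "\<And>g. g \<in> N \<Longrightarrow> add_subgroup (S g)" using gr NG unfolding group_graded_def by blast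
    have P1: "setprod_ring ?SC ?SCi \<subseteq> induced_comp S N"
    proof (rule sp_sub)
      show "0 \<in> induced_comp S N" by (rule ic_zero)
      show "\<And>x y. x \<in> induced_comp S N \<Longrightarrow> y \<in> induced_comp S N \<Longrightarrow> x + y \<in> induced_comp S N"
        by (rule ic_add[OF subN])
      fix x y assume "x \<in> ?SC" "y \<in> ?SCi"
      then show "x * y \<in> induced_comp S N"
      proof (rule ic_mult[OF gr CG CiG NG, rotated 1])
        fix g h assume g: "g \<in> C" and h: "h \<in> set_inv\<^bsub>G\<^esub> C"
        obtain n1 where n1: "n1 \<in> N" "g = n1 \<otimes>\<^bsub>G\<^esub> a" using g a unfolding r_coset_def by auto
        obtain k where k: "k \<in> C" "h = inv\<^bsub>G\<^esub> k" using h unfolding SET_INV_def by auto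
        obtain n2 where n2: "n2 \<in> N" "k = n2 \<otimes>\<^bsub>G\<^esub> a" using k a unfolding r_coset_def by auto
        have c: "n1 \<in> carrier G" "n2 \<in> carrier G" using n1 n2 NG by auto
        have "g \<otimes>\<^bsub>G\<^esub> h = n1 \<otimes>\<^bsub>G\<^esub> a \<otimes>\<^bsub>G\<^esub> (inv\<^bsub>G\<^esub> a \<otimes>\<^bsub>G\<^esub> inv\<^bsub>G\<^esub> n2)"
          using n1 k n2 c a by (simp add: inv_mult_group)
        also have "\<dots> = n1 \<otimes>\<^bsub>G\<^esub> inv\<^bsub>G\<^esub> n2" using a c by (metis m_assoc r_inv r_one inv_closed m_closed)
        finally show "g \<otimes>\<^bsub>G\<^esub> h \<in> N" using n1 n2 by simp
      qed
    qed
    fix x y assume "x \<in> setprod_ring ?SC ?SCi" "y \<in> ?SC"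
    then have "x \<in> induced_comp S N" "y \<in> ?SC" using P1 by auto
    then show "x * y \<in> ?SC"
    proof (rule ic_mult[OF gr NG CG CG, rotated 1])
      fix g h assume g: "g \<in> N" and h: "h \<in> C"
      obtain n where n: "n \<in> N" "h = n \<otimes>\<^bsub>G\<^esub> a" using h a unfolding r_coset_def by auto
      have "g \<otimes>\<^bsub>G\<^esub> h = (g \<otimes>\<^bsub>G\<^esub> n) \<otimes>\<^bsub>G\<^esub> a" using g n a NG by (auto simp: m_assoc)
      then show "g \<otimes>\<^bsub>G\<^esub> h \<in> C" using g n a unfolding r_coset_def by auto
    qed
  qed
  moreover have "?SC \<subseteq> ?P"
  proof
    fix x assume "x \<in> ?SC"
    then obtain F c where F: "finite F" "F \<subseteq> C" "\<forall>g\<in>F. c g \<in> S g" "x = (\<Sum>g\<in>F. c g)"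
      unfolding induced_comp_def by blast
    show "x \<in> ?P" unfolding F(4)
    proof (rule sp_sum[OF F(1)], intro ballI)
      fix g assume g: "g \<in> F"
      have gC: "g \<in> C" and gG: "g \<in> carrier G" using g F CG by auto
      have "c g \<in> setprod_ring (setprod_ring (S g) (S (inv\<^bsub>G\<^esub> g))) (S g)"
        using sym gG g F by auto
      also have "\<dots> \<subseteq> ?P"
      proof (intro sp_mono)
        show "S g \<subseteq> ?SC" using gC by (auto intro: ic_single)
        have "inv\<^bsub>G\<^esub> g \<in> set_inv\<^bsub>G\<^esub> C" using gC unfolding SET_INV_def by auto
        then show "S (inv\<^bsub>G\<^esub> g) \<subseteq> ?SCi" by (auto intro: ic_single)
        show "S g \<subseteq> ?SC" using gC by (auto intro: ic_single)
      qed
      finally show "c g \<in> ?P" .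
    qed
  qed
  ultimately show "setprod_ring (setprod_ring ?SC (induced_comp S (inv\<^bsub>G Mod N\<^esub> C))) ?SC = ?SC"
    unfolding inv by blast
qed

end
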